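(* Suppose the zero-padding range is chosen so that $X[m,n]=0$ for $m<m_{\min}$ and $m>m_{\max}$ (i.e., $X[m,n]\neq 0$ only for $m_{\min}\le m\le m_{\max}$), where \[ m_{\min}\geq\Big\lceil Q-l_{\min}-1+b_{\max}\big((N-1)M-1\big)\Big\rceil,\qquad m_{\max}\leq\Big\lfloor M-Q-l_{\max}-b_{\max}(N-1)M\Big\rfloor . \] Then the delay-Doppler domain input-output relation simplifies to \[ Y[m,n]=\sum_{l=0}^{l_{\max}^{\prime}}\sum_{k=0}^{N-1}X[m-l,(n-k)_{N}]\,G_{l}(m,k), \] where \[ G_{l}(m,k)=\sum_{i=1}^{P}h_{i}\,e^{j2\pi\frac{k_{i}m}{NM}}\frac{1}{N}\sum_{\dot{n}=0}^{N-1}e^{-j2\pi\frac{\dot{n}(k-k_{i})}{N}}\,a\Big(\big(l-l_{i}+b_{i}(m+\dot{n}M)\big)T_{s}\Big). \]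
   Context: Consider a zero-padded (ZP) wideband ODDM system with $M$ multicarrier symbols and $N$ subcarriers per symbol, sampling period (delay resolution) $T_s$ and $T=MT_s$. Data $X[m,n]$ ($m=0,\dots,M-1$, $n=0,\dots,N-1$) is mapped by the normalized $N$-point IFFT $x[m,\dot n]=\frac{1}{\sqrt N}\sum_{n=0}^{N-1}X[m,n]e^{j2\pi n\dot n/N}$, and the transmit waveform is $s(t)=\sum_{m=0}^{M-1}\sum_{\dot n=0}^{N-1}x[m,\dot n]\,a(t-mT_s-\dot nT)$, where $a(t)$ is a truncated Nyquist pulse for symbol interval $T_s$ with $a(t)=0$ for $|t|\ge QT_s$ and $2Q\ll M$. The channel has $P$ paths; the baseband received signal is $r(t)=\sum_{i=1}^{P}h_i e^{j2\pi\nu_i t}s\big(t-(\tau_i-b_it)\big)$ with complex gain $h_i$, delay $\tau_i=l_iT_s$, Doppler shift at the carrier $\nu_i=\frac{k_i}{NMT_s}$ ($l_i,k_i$ possibly non-integer), and Doppler scaling factor $b_i=\text{v}_i/c$ (path-length decrease speed over wave speed), with $|b_i|\le b_{\max}<1$ and $l_{\min}\le l_i\le l_{\max}$ ($l_{\min},l_{\max}$ integers). The receiver samples $y[m,\dot n]=r(mT_s+\dot nT)$ and computes $Y[m,n]=\frac{1}{\sqrt N}\sum_{\dot n=0}^{N-1}y[m,\dot n]e^{-j2\pi n\dot n/N}$. Synchronization is chosen so that the minimum equivalent delay tap is $0$, namely $l_{\min}=Q+\lfloor b_{\max}(NM-1)\rfloor$, and the maximum equivalent tap $l_{\max}^{\prime}=\lfloor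 l_{\max}+Q+b_{\max}(NM-1)\rfloor$ is assumed to satisfy $l_{\max}^{\prime}<M$. Noise is ignored. $(\cdot)_N$ denotes modulo $N$. *)

theory Defs
  imports Complex_Main
begin

definition oddm_x :: "nat \<Rightarrow> (nat \<Rightarrow> nat \<Rightarrow> complex) \<Rightarrow> nat \<Rightarrow> nat \<Rightarrow> complex" where
  "oddm_x N X m nd = (1 / of_real (sqrt (real N))) *
     (\<Sum>n<N. X m n * exp (\<i> * of_real (2 * pi * real n * real nd / real N)))"

text \<open>Transmit waveform s(t), with T = M Ts.\<close>
definition oddm_s :: "nat \<Rightarrow> nat \<Rightarrow> real \<Rightarrow> (real \<Rightarrow> complex) \<Rightarrow> (nat \<Rightarrow> nat \<Rightarrow> complex) \<Rightarrow> real \<Rightarrow> complex" where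
  "oddm_s M N Ts a X t = (\<Sum>m<M. \<Sum>nd<N.
     oddm_x N X m nd * a (t - real m * Ts - real nd * (real M * Ts)))"

text \<open>Received signal r(t) for P paths (indexed 0..P-1): gain h i, delay tau_i = l i * Ts,
  Doppler nu_i = k i / (N M Ts), Doppler scaling factor b i.\<close>
definition oddm_r :: "nat \<Rightarrow> nat \<Rightarrow> real \<Rightarrow> (real \<Rightarrow> complex) \<Rightarrow> (nat \<Rightarrow> nat \<Rightarrow> complex) \<Rightarrow>
    nat \<Rightarrow> (nat \<Rightarrow> complex) \<Rightarrow> (nat \<Rightarrow> real) \<Rightarrow> (nat \<Rightarrow> real) \<Rightarrow> (nat \<Rightarrow> real) \<Rightarrow> real \<Rightarrow> complex" where
  "oddm_r M N Ts a X P h l k b t = (\<Sum>i<P. h i *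
     exp (\<i> * of_real (2 * pi * (k i / (real N * real M * Ts)) * t)) *
     oddm_s M N Ts a X (t - (l i * Ts - b i * t)))"

definition oddm_Y :: "nat \<Rightarrow> nat \<Rightarrow> real \<Rightarrow> (real \<Rightarrow> complex) \<Rightarrow> (nat \<Rightarrow> nat \<Rightarrow> complex) \<Rightarrow>
    nat \<Rightarrow> (nat \<Rightarrow> complex) \<Rightarrow> (nat \<Rightarrow> real) \<Rightarrow> (nat \<Rightarrow> real) \<Rightarrow> (nat \<Rightarrow> real) \<Rightarrow> nat \<Rightarrow> nat \<Rightarrow> complex" where
  "oddm_Y M N Ts a X P h l k b m n = (1 / of_real (sqrt (real N))) *
     (\<Sum>nd<N. oddm_r M N Ts a X P h l k b (real m * Ts + real nd * (real M * Ts)) *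
        exp (- \<i> * of_real (2 * pi * real n * real nd / real N)))"

definition Xz :: "nat \<Rightarrow> (nat \<Rightarrow> nat \<Rightarrow> complex) \<Rightarrow> int \<Rightarrow> nat \<Rightarrow> complex" where
  "Xz M X i n = (if 0 \<le> i \<and> i < int M then X (nat i) n else 0)"

definition oddm_G :: "nat \<Rightarrow> nat \<Rightarrow> real \<Rightarrow> (real \<Rightarrow> complex) \<Rightarrow>
    nat \<Rightarrow> (nat \<Rightarrow> complex) \<Rightarrow> (nat \<Rightarrow> real) \<Rightarrow> (nat \<Rightarrow> real) \<Rightarrow> (nat \<Rightarrow> real) \<Rightarrow> nat \<Rightarrow> nat \<Rightarrow> nat \<Rightarrow> complex" where
  "oddm_G M N Ts a P h l k b ll m kk = (\<Sum>i<P. h i *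
     exp (\<i> * of_real (2 * pi * k i * real m / (real N * real M))) *
     (1 / of_nat N) *
     (\<Sum>nd<N. exp (- \<i> * of_real (2 * pi * real nd * (real kk - k i) / real N)) *
        a ((real ll - l i + b i * (real m + real nd * real M)) * Ts)))"

end

theory Submission
  imports Defs
begin


lemma exp_ix_mult: "exp (\<i> * complex_of_real x) * exp (\<i> * complex_of_real y) = exp (\<i> * complex_of_real (x + y))"
  by (simp add: exp_add[symmetric] algebra_simps)

lemma lhs_pt:
  fixes N M m n n' nd :: nat and Ts ki :: real and c hi x Av :: complex
  assumes "0 < N" "0 < M" "0 < Ts" and c: "c * c = 1 / of_nat N"
  shows "c * (hi * exp (\<i> * complex_of_real (2 * pi * (ki / (real N * real M * Ts)) * (real m * Ts + real nd * (real M * Ts)))) *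
           ((c * (x * exp (\<i> * complex_of_real (2 * pi * real n' * real nd / real N)))) * Av) *
           exp (- \<i> * complex_of_real (2 * pi * real n * real nd / real N)))
       = x * hi * Av / of_nat N * exp (\<i> * complex_of_real (2 * pi * ki * real m / (real N * real M) + 2 * pi * ki * real nd / real N + 2 * pi * real n' * real nd / real N - 2 * pi * real n * real nd / real N))"
proof -
  have e3: "exp (- \<i> * complex_of_real (2 * pi * real n * real nd / real N)) = exp (\<i> * complex_of_real (- (2 * pi * real n * real nd / real N)))"
    by simp
  have arg: "2 * pi * (ki / (real N * real M * Ts)) * (real m * Ts + real nd * (real M * Ts)) + 2 * pi * real n' * real nd / real N + - (2 * pi * real n * real nd / real N)
     = 2 * pi * ki * real m / (real N * real M) + 2 * pi * ki * real nd / real N + 2 * pi * real n' * real nd / real N - 2 * pi * real n * real nd / real N"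
    using assms(1-3) by (simp add: field_simps)
  have "c * (hi * exp (\<i> * complex_of_real (2 * pi * (ki / (real N * real M * Ts)) * (real m * Ts + real nd * (real M * Ts)))) *
           ((c * (x * exp (\<i> * complex_of_real (2 * pi * real n' * real nd / real N)))) * Av) *
           exp (- \<i> * complex_of_real (2 * pi * real n * real nd / real N)))
     = (c * c) * (x * hi * Av) * (exp (\<i> * complex_of_real (2 * pi * (ki / (real N * real M * Ts)) * (real m * Ts + real nd * (real M * Ts)))) * exp (\<i> * complex_of_real (2 * pi * real n' * real nd / real N)) * exp (\<i> * complex_of_real (- (2 * pi * real n * real nd / real N))))"
    unfolding e3 by (simp add: ac_simps)
  also have "\<dots> = (c * c) * (x * hi * Av) * exp (\<i> * complex_of_real (2 * pi * ki * real m / (real N * real M) + 2 * pi * ki * real nd / real N + 2 * pi * real n' * real nd / real N - 2 * pi * real n * real nd / real N))"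
    unfolding exp_ix_mult arg by simp
  finally show ?thesis unfolding c by simp
qed

lemma exp_ix_shift:
  assumes "x = y + 2 * pi * real_of_int j"
  shows "exp (\<i> * complex_of_real x) = exp (\<i> * complex_of_real y)"
proof -
  have "exp (\<i> * complex_of_real x) = cis x" by (simp add: cis_conv_exp)
  also have "\<dots> = cis y * cis (2 * pi * real_of_int j)" by (simp only: assms cis_mult)
  also have "cis (2 * pi * real_of_int j) = 1" by (simp add: cis.ctr one_complex.code)
  finally show ?thesis by (simp add: cis_conv_exp)
qed

lemma arg_shift:
  fixes N M m n n' nd :: nat and ki kk :: real and q :: int
  assumes "0 < N" and kk: "kk = real n - real n' - real N * real_of_int q"
  shows "2 * pi * ki * real m / (real N * real M) + - (2 * pi * real nd * (kk - ki) / real N) =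
    2 * pi * ki * real m / (real N * real M) + 2 * pi * ki * real nd / real N + 2 * pi * real n' * real nd / real N - 2 * pi * real n * real nd / real N + 2 * pi * real_of_int (int nd * q)"
proof -
  define Z where "Z = 2 * pi * real nd / real N"
  have ZN: "Z * real N = 2 * pi * real nd" using assms(1) by (simp add: Z_def)
  have 1: "2 * pi * real nd * (kk - ki) / real N = Z * (kk - ki)" by (simp add: Z_def)
  have 2: "2 * pi * ki * real nd / real N = Z * ki" by (simp add: Z_def)
  have 3: "2 * pi * real n' * real nd / real N = Z * real n'" by (simp add: Z_def)
  have 4: "2 * pi * real n * real nd / real N = Z * real n" by (simp add: Z_def)
  have 5: "2 * pi * real_of_int (int nd * q) = Z * real N * real_of_int q" by (simp add: ZN)
  show ?thesis unfolding 1 2 3 4 5 by (simp add: kk algebra_simps)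
qed

lemma rhs_pt:
  fixes N M m m' n n' nd :: nat and Ts ki li bi :: real and hi x :: complex and a :: "real \<Rightarrow> complex"
  assumes "0 < N" "0 < M" "m' \<le> m"
  shows "x * (hi * exp (\<i> * complex_of_real (2 * pi * ki * real m / (real N * real M))) * (1 / of_nat N) *
          (exp (- \<i> * complex_of_real (2 * pi * real nd * (real (nat ((int n - int n') mod int N)) - ki) / real N)) *
           a ((real (m - m') - li + bi * (real m + real nd * real M)) * Ts)))
   = x * hi * a ((real m - real m' - li + bi * (real m + real nd * real M)) * Ts) / of_nat N * exp (\<i> * complex_of_real (2 * pi * ki * real m / (real N * real M) + 2 * pi * ki * real nd / real N + 2 * pi * real n' * real nd / real N - 2 * pi * real n * real nd / real N))"
proof -
  define q where "q = (int n - int n') div int N"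
  have kk: "real (nat ((int n - int n') mod int N)) = real n - real n' - real N * real_of_int q"
  proof -
    have "(int n - int n') mod int N = int n - int n' - int N * q" unfolding q_def
      by (simp add: minus_div_mult_eq_mod[symmetric] mult.commute)
    moreover have "(int n - int n') mod int N \<ge> 0" using assms(1) by simp
    ultimately have "real (nat ((int n - int n') mod int N)) = real_of_int (int n - int n' - int N * q)"
      by (metis of_int_of_nat_eq of_nat_nat)
    then show ?thesis by simp
  qed
  have rd: "real (m - m') = real m - real m'" using assms(3) by simp
  have e: "exp (\<i> * complex_of_real (2 * pi * ki * real m / (real N * real M))) * exp (- \<i> * complex_of_real (2 * pi * real nd * (real (nat ((int n - int n') mod int N)) - ki) / real N))
     = exp (\<i> * complex_of_real (2 * pi * ki * real m / (real N * real M) + 2 * pi * ki * real nd / real N + 2 * pi * real n' * real nd / real N - 2 * pi * real n * real nd / real N))"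
  proof -
    have em: "exp (- \<i> * complex_of_real (2 * pi * real nd * (real (nat ((int n - int n') mod int N)) - ki) / real N)) = exp (\<i> * complex_of_real (- (2 * pi * real nd * (real (nat ((int n - int n') mod int N)) - ki) / real N)))"
      by simp
    have "exp (\<i> * complex_of_real (2 * pi * ki * real m / (real N * real M))) * exp (- \<i> * complex_of_real (2 * pi * real nd * (real (nat ((int n - int n') mod int N)) - ki) / real N))
      = exp (\<i> * complex_of_real (2 * pi * ki * real m / (real N * real M) + - (2 * pi * real nd * (real (nat ((int n - int n') mod int N)) - ki) / real N)))"
      unfolding em exp_ix_mult by (rule refl)
    also have "\<dots> = exp (\<i> * complex_of_real (2 * pi * ki * real m / (real N * real M) + 2 * pi * ki * real nd / real N + 2 * pi * real n' * real nd / real N - 2 * pi * real n * real nd / real N))"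
      by (rule exp_ix_shift[where j = "int nd * q"]) (rule arg_shift[OF assms(1) kk])
    finally show ?thesis .
  qed
  have re: "\<And>x hi E e' A (c::complex). x * (hi * E * (1 / c) * (e' * A)) = x * hi * A / c * (E * e')"
    by (simp add: divide_inverse ac_simps)
  show ?thesis
    unfolding rd re e by (rule refl)
qed



lemma bound_B:
  fixes M N Q m m' nd nd' :: nat and bmax bi li :: real and lmin lmax mmin mmax :: int
  assumes "bmax < 1" "0 \<le> bmax" "\<bar>bi\<bar> \<le> bmax"
    and "real_of_int lmin \<le> li" "li \<le> real_of_int lmax"
    and "m < M" "nd < N" "nd' < N" "nd' \<noteq> nd"
    and "mmin \<le> int m'" "int m' \<le> mmax"
    and mmin: "real_of_int mmin \<ge> real_of_int \<lceil>real Q - real_of_int lmin - 1 + bmax * ((real N - 1) * real M - 1)\<rceil>"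
    and mmax: "real_of_int mmax \<le> real_of_int \<lfloor>real M - real Q - real_of_int lmax - bmax * (real N - 1) * real M\<rfloor>"
  shows "real Q \<le> \<bar>real m - real m' + (real nd - real nd') * real M - li + bi * (real m + real nd * real M)\<bar>"
proof -
  have mn: "real_of_int mmin \<ge> real Q - real_of_int lmin - 1 + bmax * ((real N - 1) * real M - 1)"
    using mmin le_of_int_ceiling order_trans by blast
  have mx: "real_of_int mmax \<le> real M - real Q - real_of_int lmax - bmax * (real N - 1) * real M"
    using mmax of_int_floor_le order_trans by blast
  have m'1: "real_of_int mmin \<le> real m'" "real m' \<le> real_of_int mmax" using assms(10,11) by linarith+
  have y0: "0 \<le> real m + real nd * real M" by simp
  have bl: "- bmax * (real m + real nd * real M) \<le> bi * (real m + real nd * real M)"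
  proof -
    have "- bmax \<le> bi" using assms(3) by linarith
    then have "(- bmax) * (real m + real nd * real M) \<le> bi * (real m + real nd * real M)"
      using y0 by (rule mult_right_mono)
    then show ?thesis by simp
  qed
  have bu: "bi * (real m + real nd * real M) \<le> bmax * (real m + real nd * real M)"
  proof -
    have "bi \<le> bmax" using assms(3) by linarith
    then show ?thesis using y0 by (rule mult_right_mono)
  qed
  show ?thesis
  proof (cases "nd' < nd")
    case True
    have d: "real M \<le> (real nd - real nd') * real M" using True
    proof -
      have "1 \<le> real nd - real nd'" using True by linarith
      then have "1 * real M \<le> (real nd - real nd') * real M" by (rule mult_right_mono) simp
      then show ?thesis by simp
    qed
    have e1: "bmax * real m \<le> real m" using assms(1,2) by (simp add: mult_left_le_one_le)
    have e2: "bmax * (real nd * real M) \<le> bmax * ((real N - 1) * real M)"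
      using assms(2,7) by (intro mult_left_mono mult_right_mono) auto
    have "real Q \<le> real m - real m' + (real nd - real nd') * real M - li + bi * (real m + real nd * real M)"
    proof -
      have h1: "bmax * (real m + real nd * real M) = bmax * real m + bmax * (real nd * real M)"
        by (simp only: distrib_left)
      have h2: "bmax * (real N - 1) * real M = bmax * ((real N - 1) * real M)" by (simp only: mult.assoc)
      have h3: "- bmax * (real m + real nd * real M) = - (bmax * (real m + real nd * real M))" by simp
      show ?thesis using d e1 e2 bl mx m'1 assms(5) h1 h2 h3 by linarith
    qed
    then show ?thesis by linarith
  next
    case False
    then have lt: "nd < nd'" using assms(9) by simp
    define e where "e = real nd' - real nd"
    have e1: "1 \<le> e" using lt e_def by simp
    have ndle: "real nd \<le> real N - 1 - e" using assms(8) e_def by simp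
    have f1: "bmax * (real nd * real M) \<le> bmax * ((real N - 1 - e) * real M)"
      using assms(2) ndle by (intro mult_left_mono mult_right_mono) auto
    have f2: "(1 + bmax) * real M \<le> e * ((1 + bmax) * real M)"
    proof -
      have "1 * ((1 + bmax) * real M) \<le> e * ((1 + bmax) * real M)"
        using e1 assms(2) by (intro mult_right_mono) auto
      then show ?thesis by simp
    qed
    have f3: "(1 + bmax) * real m \<le> (1 + bmax) * (real M - 1)"
      using assms(2,6) by (intro mult_left_mono) auto
    have "real m - real m' + (real nd - real nd') * real M - li + bi * (real m + real nd * real M) \<le> - real Q"
    proof -
      have h1: "bmax * (real m + real nd * real M) = bmax * real m + bmax * (real nd * real M)"
        by (simp only: distrib_left)
      have h2: "bmax * ((real N - 1 - e) * real M) = bmax * ((real N - 1) * real M) - e * (bmax * real M)"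
        by (simp add: algebra_simps)
      have h3: "e * ((1 + bmax) * real M) = e * real M + e * (bmax * real M)" by (simp add: algebra_simps)
      have h4: "(1 + bmax) * real M = real M + bmax * real M" by (simp add: algebra_simps)
      have h5: "(1 + bmax) * real m = real m + bmax * real m" by (simp add: algebra_simps)
      have h6: "(1 + bmax) * (real M - 1) = real M + bmax * real M - 1 - bmax" by (simp add: algebra_simps)
      have h7: "bmax * ((real N - 1) * real M - 1) = bmax * ((real N - 1) * real M) - bmax" by (simp add: algebra_simps)
      have h8: "(real nd - real nd') * real M = - (e * real M)" unfolding e_def by (simp add: algebra_simps)
      show ?thesis using f1 f2 f3 bu mn m'1 assms(4) h1 h2 h3 h4 h5 h6 h7 h8 by argo
    qed
    then show ?thesis by linarith
  qed
qed

lemma bound_C: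
  fixes M N Q m m' nd :: nat and bmax bi li :: real and lmin lmax :: int
  assumes "0 \<le> bmax" "\<bar>bi\<bar> \<le> bmax"
    and "real_of_int lmin \<le> li" "li \<le> real_of_int lmax"
    and "m < M" "nd < N"
    and sync: "lmin = int Q + \<lfloor>bmax * (real N * real M - 1)\<rfloor>"
    and nin: "\<not> (m' \<le> m \<and> m - m' \<le> nat \<lfloor>real_of_int lmax + real Q + bmax * (real N * real M - 1)\<rfloor>)"
  shows "real Q \<le> \<bar>real m - real m' - li + bi * (real m + real nd * real M)\<bar>"
proof -
  define y where "y = real m + real nd * real M"
  have y0: "0 \<le> y" unfolding y_def by simp
  have "real nd * real M \<le> (real N - 1) * real M"
    using assms(6) by (intro mult_right_mono) auto
  then have yle: "y \<le> real N * real M - 1" using assms(5) unfolding y_def by (simp add: algebra_simps)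
  have bl: "- bmax * y \<le> bi * y"
  proof -
    have "- bmax \<le> bi" using assms(2) by linarith
    then have "(- bmax) * y \<le> bi * y" using y0 by (rule mult_right_mono)
    then show ?thesis by simp
  qed
  have bu: "bi * y \<le> bmax * y"
  proof -
    have "bi \<le> bmax" using assms(2) by linarith
    then show ?thesis using y0 by (rule mult_right_mono)
  qed
  have by1: "bmax * y \<le> bmax * (real N * real M - 1)" using yle assms(1) by (rule mult_left_mono)
  show ?thesis
  proof (cases "m' \<le> m")
    case False
    have fl: "real_of_int lmin > real Q + bmax * (real N * real M - 1) - 1"
      using sync real_of_int_floor_gt_diff_one[of "bmax * (real N * real M - 1)"] by simp
    have "real m - real m' - li + bi * y \<le> - real Q"
      using False fl bu by1 assms(3) by linarith
    then show ?thesis unfolding y_def by linarith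
  next
    case True
    then have big: "m - m' > nat \<lfloor>real_of_int lmax + real Q + bmax * (real N * real M - 1)\<rfloor>" using nin by simp
    have "real (m - m') > real_of_int lmax + real Q + bmax * (real N * real M - 1)"
    proof -
      have "int (m - m') \<ge> \<lfloor>real_of_int lmax + real Q + bmax * (real N * real M - 1)\<rfloor> + 1"
        using big by linarith
      then show ?thesis by linarith
    qed
    then have "real m - real m' > real_of_int lmax + real Q + bmax * (real N * real M - 1)"
      using True by simp
    then have "real m - real m' - li + bi * y \<ge> real Q"
      using bl by1 assms(4) by linarith
    then show ?thesis unfolding y_def by linarith
  qed
qed



lemma reindex_mod:
  fixes N n :: nat assumes "0 < N"
  shows "(\<Sum>kk<N. f (nat ((int n - int kk) mod int N)) kk) = (\<Sum>n'<N. f n' (nat ((int n - int n') mod int N)))"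
proof (rule sum.reindex_bij_witness[where i = "\<lambda>n'. nat ((int n - int n') mod int N)" and j = "\<lambda>kk. nat ((int n - int kk) mod int N)"])
  fix kk assume "kk \<in> {..<N}"
  then show "nat ((int n - int (nat ((int n - int kk) mod int N))) mod int N) = kk"
    using assms by (simp add: mod_diff_right_eq)
next
  fix kk assume "kk \<in> {..<N}"
  then show "nat ((int n - int kk) mod int N) \<in> {..<N}" using assms by (simp add: nat_less_iff)
next
  fix kk assume "kk \<in> {..<N}"
  then show "nat ((int n - int (nat ((int n - int kk) mod int N))) mod int N) = kk"
    using assms by (simp add: mod_diff_right_eq)
next
  fix kk assume "kk \<in> {..<N}"
  then show "nat ((int n - int kk) mod int N) \<in> {..<N}" using assms by (simp add: nat_less_iff)
next
  fix kk assume "kk \<in> {..<N}"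
  then show "f (nat ((int n - int kk) mod int N)) (nat ((int n - int (nat ((int n - int kk) mod int N))) mod int N)) = f (nat ((int n - int kk) mod int N)) kk"
    using assms by (simp add: mod_diff_right_eq)
qed


lemma swap4:
  "(\<Sum>a\<in>A. \<Sum>b\<in>B. \<Sum>c\<in>C. \<Sum>d\<in>D. f a b c d) = (\<Sum>c\<in>C. \<Sum>d\<in>D. \<Sum>b\<in>B. \<Sum>a\<in>A. (f a b c d :: 'z::comm_monoid_add))"
proof -
  have "(\<Sum>a\<in>A. \<Sum>b\<in>B. \<Sum>c\<in>C. \<Sum>d\<in>D. f a b c d) = (\<Sum>a\<in>A. \<Sum>c\<in>C. \<Sum>b\<in>B. \<Sum>d\<in>D. f a b c d)"
    by (intro sum.cong refl sum.swap)
  also have "\<dots> = (\<Sum>c\<in>C. \<Sum>a\<in>A. \<Sum>b\<in>B. \<Sum>d\<in>D. f a b c d)" by (rule sum.swap)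
  also have "\<dots> = (\<Sum>c\<in>C. \<Sum>a\<in>A. \<Sum>d\<in>D. \<Sum>b\<in>B. f a b c d)"
    by (intro sum.cong refl sum.swap)
  also have "\<dots> = (\<Sum>c\<in>C. \<Sum>d\<in>D. \<Sum>a\<in>A. \<Sum>b\<in>B. f a b c d)"
    by (intro sum.cong refl sum.swap)
  also have "\<dots> = (\<Sum>c\<in>C. \<Sum>d\<in>D. \<Sum>b\<in>B. \<Sum>a\<in>A. f a b c d)"
    by (intro sum.cong refl sum.swap)
  finally show ?thesis .
qed

lemma sqrt_inv_sq: "0 < N \<Longrightarrow> (1 / complex_of_real (sqrt (real N))) * (1 / complex_of_real (sqrt (real N))) = 1 / of_nat N"
proof -
  assume "0 < N"
  have "sqrt (real N) * sqrt (real N) = real N" by simp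
  then have "complex_of_real (sqrt (real N)) * complex_of_real (sqrt (real N)) = of_nat N"
    by (metis of_real_mult of_real_of_nat_eq)
  moreover have "\<And>c::complex. (1 / c) * (1 / c) = 1 / (c * c)" by simp
  ultimately show ?thesis by metis
qed


theorem theorem2:
  fixes M N Q P :: nat and Ts bmax :: real and a :: "real \<Rightarrow> complex"
    and X :: "nat \<Rightarrow> nat \<Rightarrow> complex" and h :: "nat \<Rightarrow> complex"
    and l k b :: "nat \<Rightarrow> real" and lmin lmax mmin mmax :: int
  assumes M_pos: "0 < M" and N_pos: "0 < N" and Ts_pos: "0 < Ts"
    and QM: "2 * Q < M"
    and a_supp: "\<And>t. \<bar>t\<bar> \<ge> real Q * Ts \<Longrightarrow> a t = 0"
    and bmax: "0 \<le> bmax" "bmax < 1"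
    and b_bound: "\<And>i. i < P \<Longrightarrow> \<bar>b i\<bar> \<le> bmax"
    and l_bound: "\<And>i. i < P \<Longrightarrow> real_of_int lmin \<le> l i \<and> l i \<le> real_of_int lmax"
    and sync: "lmin = int Q + \<lfloor>bmax * (real N * real M - 1)\<rfloor>"
    and lmaxp_lt: "\<lfloor>real_of_int lmax + real Q + bmax * (real N * real M - 1)\<rfloor> < int M"
    and mmin: "real_of_int mmin \<ge> real_of_int \<lceil>real Q - real_of_int lmin - 1 + bmax * ((real N - 1) * real M - 1)\<rceil>"
    and mmax: "real_of_int mmax \<le> real_of_int \<lfloor>real M - real Q - real_of_int lmax - bmax * (real N - 1) * real M\<rfloor>"
    and ZP: "\<And>m n. m < M \<Longrightarrow> n < N \<Longrightarrow> (int m < mmin \<or> int m > mmax) \<Longrightarrow> X m n = 0"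
  shows "\<forall>m<M. \<forall>n<N.
     oddm_Y M N Ts a X P h l k b m n =
     (\<Sum>ll\<in>{0..nat \<lfloor>real_of_int lmax + real Q + bmax * (real N * real M - 1)\<rfloor>}.
        \<Sum>kk<N. Xz M X (int m - int ll) (nat ((int n - int kk) mod int N)) *
                 oddm_G M N Ts a P h l k b ll m kk)"
  proof (intro allI impI)
  fix m n assume m: "m < M" and n: "n < N"
  define L where "L = nat \<lfloor>real_of_int lmax + real Q + bmax * (real N * real M - 1)\<rfloor>"
  define A where "A i nd m' = a ((real m - real m' - l i + b i * (real m + real nd * real M)) * Ts)" for i nd m'
  define ph where "ph i nd n' = 2 * pi * k i * real m / (real N * real M) + 2 * pi * k i * real nd / real N + 2 * pi * real n' * real nd / real N - 2 * pi * real n * real nd / real N" for i nd n'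
  define T where "T m' n' i nd = X m' n' * h i * A i nd m' / of_nat N * exp (\<i> * complex_of_real (ph i nd n'))" for m' n' i nd
  define S where "S = {m'. m' \<le> m \<and> m - m' \<le> L}"
  have aQ: "\<And>u. real Q \<le> \<bar>u\<bar> \<Longrightarrow> a (u * Ts) = 0"
  proof -
    fix u :: real assume "real Q \<le> \<bar>u\<bar>"
    then have "real Q * Ts \<le> \<bar>u\<bar> * Ts" using Ts_pos by (intro mult_right_mono) auto
    then show "a (u * Ts) = 0" using Ts_pos by (intro a_supp) (simp add: abs_mult)
  qed
  have s_red: "oddm_s M N Ts a X ((real m * Ts + real nd * (real M * Ts)) - (l i * Ts - b i * (real m * Ts + real nd * (real M * Ts))))
      = (\<Sum>m'<M. oddm_x N X m' nd * A i nd m')" if i: "i < P" and nd: "nd < N" for i nd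
  proof -
    define t where "t = real m * Ts + real nd * (real M * Ts)"
    have key: "(\<Sum>nd'<N. oddm_x N X m' nd' * a (t - (l i * Ts - b i * t) - real m' * Ts - real nd' * (real M * Ts))) = oddm_x N X m' nd * A i nd m'"
      if m': "m' < M" for m'
    proof -
      have arg: "t - (l i * Ts - b i * t) - real m' * Ts - real nd' * (real M * Ts) = (real m - real m' + (real nd - real nd') * real M - l i + b i * (real m + real nd * real M)) * Ts" for nd'
        by (simp add: t_def algebra_simps)
      have z: "oddm_x N X m' nd' * a (t - (l i * Ts - b i * t) - real m' * Ts - real nd' * (real M * Ts)) = 0"
        if nd': "nd' < N" "nd' \<noteq> nd" for nd'
      proof (cases "mmin \<le> int m' \<and> int m' \<le> mmax")
        case True
        have "real Q \<le> \<bar>real m - real m' + (real nd - real nd') * real M - l i + b i * (real m + real nd * real M)\<bar>"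
          using bound_B[OF bmax(2) bmax(1) b_bound[OF i] conjunct1[OF l_bound[OF i]] conjunct2[OF l_bound[OF i]] m nd nd'(1) nd'(2)] True mmin mmax by blast
        then show ?thesis unfolding arg by (simp add: aQ)
      next
        case False
        then have "\<forall>n'<N. X m' n' = 0" using ZP m' by auto
        then show ?thesis by (simp add: oddm_x_def)
      qed
      have "(\<Sum>nd'<N. oddm_x N X m' nd' * a (t - (l i * Ts - b i * t) - real m' * Ts - real nd' * (real M * Ts)))
         = (\<Sum>nd'<N. if nd' = nd then oddm_x N X m' nd * a (t - (l i * Ts - b i * t) - real m' * Ts - real nd * (real M * Ts)) else 0)"
        by (rule sum.cong) (auto simp: z)
      also have "\<dots> = oddm_x N X m' nd * a (t - (l i * Ts - b i * t) - real m' * Ts - real nd * (real M * Ts))"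
        using nd by simp
      also have "\<dots> = oddm_x N X m' nd * A i nd m'" unfolding arg A_def by simp
      finally show ?thesis .
    qed
    show ?thesis unfolding oddm_s_def t_def[symmetric] by (intro sum.cong refl) (simp add: key)
  qed
  have LHS: "oddm_Y M N Ts a X P h l k b m n = (\<Sum>nd<N. \<Sum>i<P. \<Sum>m'<M. \<Sum>n'<N. T m' n' i nd)"
  proof -
    have "oddm_Y M N Ts a X P h l k b m n = (1 / complex_of_real (sqrt (real N))) * (\<Sum>nd<N. (\<Sum>i<P. h i * exp (\<i> * complex_of_real (2 * pi * (k i / (real N * real M * Ts)) * (real m * Ts + real nd * (real M * Ts)))) * (\<Sum>m'<M. oddm_x N X m' nd * A i nd m')) * exp (- \<i> * complex_of_real (2 * pi * real n * real nd / real N)))"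
      unfolding oddm_Y_def oddm_r_def by (auto intro!: sum.cong simp: s_red)
    also have "\<dots> = (\<Sum>nd<N. \<Sum>i<P. \<Sum>m'<M. \<Sum>n'<N. T m' n' i nd)"
      unfolding oddm_x_def sum_distrib_left sum_distrib_right
      by (intro sum.cong refl) (unfold T_def ph_def, rule lhs_pt[OF N_pos M_pos Ts_pos sqrt_inv_sq[OF N_pos]])
    finally show ?thesis .
  qed
  have LHS2: "(\<Sum>nd<N. \<Sum>i<P. \<Sum>m'<M. \<Sum>n'<N. T m' n' i nd) = (\<Sum>m'\<in>S. \<Sum>n'<N. \<Sum>i<P. \<Sum>nd<N. T m' n' i nd)"
  proof -
    have "(\<Sum>nd<N. \<Sum>i<P. \<Sum>m'<M. \<Sum>n'<N. T m' n' i nd) = (\<Sum>m'<M. \<Sum>n'<N. \<Sum>i<P. \<Sum>nd<N. T m' n' i nd)"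
      by (rule swap4)
    also have "\<dots> = (\<Sum>m'\<in>S. \<Sum>n'<N. \<Sum>i<P. \<Sum>nd<N. T m' n' i nd)"
    proof (rule sum.mono_neutral_right)
      show "finite {..<M}" by simp
      show "S \<subseteq> {..<M}" unfolding S_def using m by auto
      show "\<forall>m'\<in>{..<M} - S. (\<Sum>n'<N. \<Sum>i<P. \<Sum>nd<N. T m' n' i nd) = 0"
      proof
        fix m' assume m': "m' \<in> {..<M} - S"
        have "T m' n' i nd = 0" if i: "i < P" and nd: "nd < N" for n' i nd
        proof -
          have nin: "\<not> (m' \<le> m \<and> m - m' \<le> nat \<lfloor>real_of_int lmax + real Q + bmax * (real N * real M - 1)\<rfloor>)"
            using m' unfolding S_def L_def by auto
          have "real Q \<le> \<bar>real m - real m' - l i + b i * (real m + real nd * real M)\<bar>"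
            by (rule bound_C[OF bmax(1) b_bound[OF i] conjunct1[OF l_bound[OF i]] conjunct2[OF l_bound[OF i]] m nd sync nin])
          then have "A i nd m' = 0" unfolding A_def by (rule aQ)
          then show ?thesis unfolding T_def by simp
        qed
        then show "(\<Sum>n'<N. \<Sum>i<P. \<Sum>nd<N. T m' n' i nd) = 0" by simp
      qed
    qed
    finally show ?thesis .
  qed
  have RHS: "(\<Sum>ll\<in>{0..L}. \<Sum>kk<N. Xz M X (int m - int ll) (nat ((int n - int kk) mod int N)) * oddm_G M N Ts a P h l k b ll m kk)
     = (\<Sum>m'\<in>S. \<Sum>n'<N. \<Sum>i<P. \<Sum>nd<N. T m' n' i nd)"
  proof -
    define g where "g ll = (\<Sum>kk<N. Xz M X (int m - int ll) (nat ((int n - int kk) mod int N)) * oddm_G M N Ts a P h l k b ll m kk)" for ll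
    have "(\<Sum>ll\<in>{0..L}. \<Sum>kk<N. Xz M X (int m - int ll) (nat ((int n - int kk) mod int N)) * oddm_G M N Ts a P h l k b ll m kk)
        = (\<Sum>ll\<in>{0..L}. g ll)" unfolding g_def by simp
    also have "\<dots> = (\<Sum>ll\<in>{0..L} \<inter> {..m}. g ll)"
    proof (rule sum.mono_neutral_right)
      show "finite {0..L}" by simp
      show "{0..L} \<inter> {..m} \<subseteq> {0..L}" by auto
      show "\<forall>ll\<in>{0..L} - {0..L} \<inter> {..m}. g ll = 0"
        unfolding g_def Xz_def by auto
    qed
    also have "\<dots> = (\<Sum>m'\<in>S. g (m - m'))"
      by (rule sum.reindex_bij_witness[where i = "\<lambda>m'. m - m'" and j = "\<lambda>ll. m - ll"]) (auto simp: S_def)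
    also have "\<dots> = (\<Sum>m'\<in>S. \<Sum>n'<N. \<Sum>i<P. \<Sum>nd<N. T m' n' i nd)"
    proof (rule sum.cong[OF refl])
      fix m' assume m'S: "m' \<in> S"
      then have m'm: "m' \<le> m" unfolding S_def by simp
      have xz: "Xz M X (int m - int (m - m')) j = X m' j" for j
        using m'm m unfolding Xz_def by (simp add: of_nat_diff)
      have "g (m - m') = (\<Sum>kk<N. X m' (nat ((int n - int kk) mod int N)) * oddm_G M N Ts a P h l k b (m - m') m kk)"
        unfolding g_def xz by simp
      also have "\<dots> = (\<Sum>n'<N. X m' n' * oddm_G M N Ts a P h l k b (m - m') m (nat ((int n - int n') mod int N)))"
        by (rule reindex_mod[OF N_pos, where f = "\<lambda>n' kk. X m' n' * oddm_G M N Ts a P h l k b (m - m') m kk"])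
      also have "\<dots> = (\<Sum>n'<N. \<Sum>i<P. \<Sum>nd<N. T m' n' i nd)"
        unfolding oddm_G_def sum_distrib_left
        by (intro sum.cong refl) (unfold T_def ph_def A_def, rule rhs_pt[OF N_pos M_pos m'm])
      finally show "g (m - m') = (\<Sum>n'<N. \<Sum>i<P. \<Sum>nd<N. T m' n' i nd)" .
    qed
    finally show ?thesis .
  qed
  show "oddm_Y M N Ts a X P h l k b m n =
     (\<Sum>ll\<in>{0..nat \<lfloor>real_of_int lmax + real Q + bmax * (real N * real M - 1)\<rfloor>}.
        \<Sum>kk<N. Xz M X (int m - int ll) (nat ((int n - int kk) mod int N)) *
                 oddm_G M N Ts a P h l k b ll m kk)"
    using LHS LHS2 RHS unfolding L_def by simp
qed

end
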